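(* Let $M,N\ge1$ be integers, let $L$ be a common divisor of $M$ and $N$, and let $T=\mathrm{lcm}(M,N)$. The group $H_{M,N,L}$ has exponent $T$ if $T$ is odd or $T/L$ is even, and exponent $2T$ otherwise. In particular $H_{N,N,N}$, for $N$ odd, and $H_{N,N,N/2}$, for $N$ even, have exponent $N$.
   Context: The Heisenberg group over $\mathbb{Z}$ is the group of $3\times3$ unipotent upper triangular integer matrices; it is generated by $x=\begin{pmatrix}1&1&0\\0&1&0\\0&0&1\end{pmatrix}$, $y=\begin{pmatrix}1&0&0\\0&1&1\\0&0&1\end{pmatrix}$, with $z=xyx^{-1}y^{-1}=\begin{pmatrix}1&0&1\\0&1&0\\0&0&1\end{pmatrix}$ central. For $M,N\ge1$ and $L$ a common divisor of $M$ and $N$, $H_{M,N,L}$ is the group generated by $x,y$ subject to the relations $xz=zx$, $yz=zy$, $z=xyx^{-1}y^{-1}$, $x^N=y^M=z^L=1$; it has order $MNL$. *)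

theory Defs
  imports "HOL-Algebra.Algebra"
begin

text \<open>The finitely presented group H_{M,N,L}: words in the generators x, y and their
inverses, modulo the congruence generated by free cancellation and the defining relators
(with z := x y x^-1 y^-1).\<close>

datatype gen = GX | GY

type_synonym hword = "(gen \<times> bool) list"   \<comment> \<open>(generator, is_inverse)\<close>

definition inv_letter :: "gen \<times> bool \<Rightarrow> gen \<times> bool" where
  "inv_letter a = (fst a, \<not> snd a)"

definition wx :: hword where "wx = [(GX, False)]"
definition wy :: hword where "wy = [(GY, False)]"
definition wxi :: hword where "wxi = [(GX, True)]"
definition wyi :: hword where "wyi = [(GY, True)]"
definition wz :: hword where "wz = wx @ wy @ wxi @ wyi"
definition wzi :: hword where "wzi = wy @ wx @ wyi @ wxi"

definition wpow :: "hword \<Rightarrow> nat \<Rightarrow> hword" where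
  "wpow w n = concat (replicate n w)"

definition heis_relators :: "nat \<Rightarrow> nat \<Rightarrow> nat \<Rightarrow> hword set" where
  "heis_relators M N L =
     {wx @ wz @ wxi @ wzi, wy @ wz @ wyi @ wzi, wpow wx N, wpow wy M, wpow wz L}"

inductive heis_eq :: "nat \<Rightarrow> nat \<Rightarrow> nat \<Rightarrow> hword \<Rightarrow> hword \<Rightarrow> bool"
  for M N L :: nat where
  refl: "heis_eq M N L u u"
| sym: "heis_eq M N L u v \<Longrightarrow> heis_eq M N L v u"
| trans: "heis_eq M N L u v \<Longrightarrow> heis_eq M N L v w \<Longrightarrow> heis_eq M N L u w"
| cancel: "heis_eq M N L (u @ [a, inv_letter a] @ v) (u @ v)"
| relator: "r \<in> heis_relators M N L \<Longrightarrow> heis_eq M N L (u @ r @ v) (u @ v)"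

definition heis_class :: "nat \<Rightarrow> nat \<Rightarrow> nat \<Rightarrow> hword \<Rightarrow> hword set" where
  "heis_class M N L w = {v. heis_eq M N L w v}"

definition heis_group :: "nat \<Rightarrow> nat \<Rightarrow> nat \<Rightarrow> hword set monoid" where
  "heis_group M N L = \<lparr> carrier = range (heis_class M N L),
              monoid.mult = (\<lambda>A B. \<Union>a\<in>A. \<Union>b\<in>B. heis_class M N L (a @ b)),
              monoid.one = heis_class M N L [] \<rparr>"

definition exponent :: "('a, 'b) monoid_scheme \<Rightarrow> nat" where
  "exponent G = (LEAST n. 0 < n \<and> (\<forall>g\<in>carrier G. g [^]\<^bsub>G\<^esub> n = \<one>\<^bsub>G\<^esub>))"

end

theory Submission
  imports Defs
begin

section \<open>Word manipulations\<close>

lemma heis_ctx: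
  assumes "heis_eq M N L u v"
  shows "heis_eq M N L (p @ u @ q) (p @ v @ q)"
  using assms
proof (induction arbitrary: p q rule: heis_eq.induct)
  case (refl u) then show ?case by (rule heis_eq.refl)
next
  case (sym u v) then show ?case by (blast intro: heis_eq.sym)
next
  case (trans u v w) then show ?case by (blast intro: heis_eq.trans)
next
  case (cancel u a v)
  have "heis_eq M N L ((p @ u) @ [a, inv_letter a] @ (v @ q)) ((p @ u) @ (v @ q))"
    by (rule heis_eq.cancel)
  then show ?case by simp
next
  case (relator r u v)
  have "heis_eq M N L ((p @ u) @ r @ (v @ q)) ((p @ u) @ (v @ q))"
    by (rule heis_eq.relator[OF relator])
  then show ?case by simp
qed

lemma heis_ctxL: "heis_eq M N L u v \<Longrightarrow> heis_eq M N L (p @ u) (p @ v)"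
  using heis_ctx[of M N L u v p "[]"] by simp

lemma heis_ctxR: "heis_eq M N L u v \<Longrightarrow> heis_eq M N L (u @ q) (v @ q)"
  using heis_ctx[of M N L u v "[]" q] by simp

lemma heis_cancel': "heis_eq M N L (u @ a # inv_letter a # v) (u @ v)"
  using heis_eq.cancel[of M N L u a v] by simp

lemma heis_rel0: "r \<in> heis_relators M N L \<Longrightarrow> heis_eq M N L r []"
  using heis_eq.relator[of r M N L "[]" "[]"] by simp

definition invw :: "hword \<Rightarrow> hword" where
  "invw w = rev (map inv_letter w)"

lemma inv_letter_inv[simp]: "inv_letter (inv_letter a) = a"
  by (simp add: inv_letter_def)

lemma invw_invw[simp]: "invw (invw w) = w"
  by (simp add: invw_def rev_map comp_def)

lemma invw_right: "heis_eq M N L (w @ invw w) []"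
proof (induction w)
  case Nil then show ?case by (simp add: invw_def heis_eq.refl)
next
  case (Cons l w)
  have "(l # w) @ invw (l # w) = [l] @ (w @ invw w) @ [inv_letter l]"
    by (simp add: invw_def)
  moreover have "heis_eq M N L ([l] @ (w @ invw w) @ [inv_letter l]) ([l] @ [] @ [inv_letter l])"
    by (rule heis_ctx[OF Cons])
  moreover have "heis_eq M N L ([] @ l # inv_letter l # []) ([] @ [])"
    by (rule heis_cancel')
  ultimately show ?case by (auto intro: heis_eq.trans)
qed

lemma invw_left: "heis_eq M N L (invw w @ w) []"
  using invw_right[of M N L "invw w"] by simp

lemma heis_comm:
  assumes "heis_eq M N L (a @ b @ invw a @ invw b) []"
  shows "heis_eq M N L (b @ a) (a @ b)"
proof -
  have 1: "heis_eq M N L ((a @ b @ invw a @ invw b) @ (b @ a)) ([] @ (b @ a))"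
    by (rule heis_ctxR[OF assms])
  have 2: "heis_eq M N L ((a @ b @ invw a) @ (invw b @ b) @ a) ((a @ b @ invw a) @ [] @ a)"
    by (rule heis_ctx[OF invw_left])
  have 3: "heis_eq M N L ((a @ b) @ (invw a @ a) @ []) ((a @ b) @ [] @ [])"
    by (rule heis_ctx[OF invw_left])
  from 1 2 3 show ?thesis
    by simp (meson heis_eq.sym heis_eq.trans)
qed

lemma wpow_Suc: "wpow w (Suc n) = w @ wpow w n"
  by (simp add: wpow_def)

lemma wpow_0[simp]: "wpow w 0 = []"
  by (simp add: wpow_def)

lemma wpow_Suc2: "wpow w (Suc n) = wpow w n @ w"
  by (simp add: wpow_def replicate_append_same[symmetric] del: replicate_append_same)

lemma wpow_add: "wpow w (m + n) = wpow w m @ wpow w n"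
  by (simp add: wpow_def replicate_add)

lemma wpow_mult: "wpow w (m * n) = wpow (wpow w m) n"
  by (induction n) (simp_all add: wpow_Suc wpow_add)

lemma comm_pow:
  assumes "heis_eq M N L (a @ b) (b @ a)"
  shows "heis_eq M N L (wpow a c @ b) (b @ wpow a c)"
proof (induction c)
  case 0 then show ?case by (simp add: heis_eq.refl)
next
  case (Suc c)
  have "heis_eq M N L (a @ (wpow a c @ b)) (a @ (b @ wpow a c))"
    by (rule heis_ctxL[OF Suc])
  moreover have "heis_eq M N L ((a @ b) @ wpow a c) ((b @ a) @ wpow a c)"
    by (rule heis_ctxR[OF assms])
  ultimately show ?case by (simp add: wpow_Suc) (meson heis_eq.trans)
qed

lemma comm_pow2:
  assumes "heis_eq M N L (a @ b) (b @ a)"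
  shows "heis_eq M N L (wpow a c @ wpow b d) (wpow b d @ wpow a c)"
proof -
  have "heis_eq M N L (b @ wpow a c) (wpow a c @ b)"
    using comm_pow[OF assms] by (rule heis_eq.sym)
  then have "heis_eq M N L (wpow b d @ wpow a c) (wpow a c @ wpow b d)"
    by (rule comm_pow)
  then show ?thesis by (rule heis_eq.sym)
qed

lemma zx_comm: "heis_eq M N L (wz @ wx) (wx @ wz)"
proof (rule heis_comm)
  have "wx @ wz @ invw wx @ invw wz = wx @ wz @ wxi @ wzi"
    by (simp add: invw_def wx_def wxi_def wz_def wzi_def wy_def wyi_def inv_letter_def)
  then show "heis_eq M N L (wx @ wz @ invw wx @ invw wz) []"
    by (simp add: heis_rel0 heis_relators_def)
qed

lemma zy_comm: "heis_eq M N L (wz @ wy) (wy @ wz)"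
proof (rule heis_comm)
  have "wy @ wz @ invw wy @ invw wz = wy @ wz @ wyi @ wzi"
    by (simp add: invw_def wx_def wxi_def wz_def wzi_def wy_def wyi_def inv_letter_def)
  then show "heis_eq M N L (wy @ wz @ invw wy @ invw wz) []"
    by (simp add: heis_rel0 heis_relators_def)
qed

lemma xy_z: "heis_eq M N L (wz @ wy @ wx) (wx @ wy)"
proof -
  have 1: "heis_eq M N L ([(GX,False),(GY,False),(GX,True)] @ (GY,True) # inv_letter (GY,True) # [(GX,False)])
     ([(GX,False),(GY,False),(GX,True)] @ [(GX,False)])" by (rule heis_cancel')
  have 2: "heis_eq M N L ([(GX,False),(GY,False)] @ (GX,True) # inv_letter (GX,True) # [])
     ([(GX,False),(GY,False)] @ [])" by (rule heis_cancel')
  from 1 2 show ?thesis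
    by (simp add: wx_def wz_def wy_def wxi_def wyi_def inv_letter_def) (meson heis_eq.trans)
qed

lemma xpow_y: "heis_eq M N L (wpow wx a @ wy) (wpow wz a @ wy @ wpow wx a)"
proof (induction a)
  case 0 then show ?case by (simp add: heis_eq.refl)
next
  case (Suc a)
  have 1: "heis_eq M N L (wx @ (wpow wx a @ wy)) (wx @ (wpow wz a @ wy @ wpow wx a))"
    by (rule heis_ctxL[OF Suc])
  have 2: "heis_eq M N L ((wx @ wpow wz a) @ (wy @ wpow wx a)) ((wpow wz a @ wx) @ (wy @ wpow wx a))"
    by (rule heis_ctxR[OF heis_eq.sym[OF comm_pow[OF zx_comm]]])
  have 3: "heis_eq M N L (wpow wz a @ (wx @ wy) @ wpow wx a) (wpow wz a @ (wz @ wy @ wx) @ wpow wx a)"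
    by (rule heis_ctx[OF heis_eq.sym[OF xy_z]])
  have e1: "wpow wx (Suc a) @ wy = wx @ (wpow wx a @ wy)" by (simp add: wpow_Suc)
  have e2: "wpow wz (Suc a) @ wy @ wpow wx (Suc a) = wpow wz a @ (wz @ wy @ wx) @ wpow wx a"
  proof -
    have c: "wz @ wpow wz a = wpow wz a @ wz" by (metis wpow_Suc wpow_Suc2)
    show ?thesis by (simp add: wpow_Suc) (metis c append_assoc)
  qed
  show ?case unfolding e1 e2 using 1 2 3 by simp (meson heis_eq.trans)
qed

definition nf :: "nat \<Rightarrow> nat \<Rightarrow> nat \<Rightarrow> hword" where
  "nf a b c = wpow wz c @ wpow wy b @ wpow wx a"

definition hasnf :: "nat \<Rightarrow> nat \<Rightarrow> nat \<Rightarrow> hword \<Rightarrow> bool" where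
  "hasnf M N L u = (\<exists>a b c. heis_eq M N L u (nf a b c))"

lemma hasnf_x: "hasnf M N L u \<Longrightarrow> hasnf M N L (u @ wx)"
proof -
  assume "hasnf M N L u"
  then obtain a b c where h: "heis_eq M N L u (nf a b c)" by (auto simp: hasnf_def)
  have "heis_eq M N L (u @ wx) (nf a b c @ wx)" by (rule heis_ctxR[OF h])
  moreover have "nf a b c @ wx = nf (Suc a) b c" by (simp add: nf_def wpow_Suc2)
  ultimately show ?thesis unfolding hasnf_def by auto
qed

lemma hasnf_y: "hasnf M N L u \<Longrightarrow> hasnf M N L (u @ wy)"
proof -
  assume "hasnf M N L u"
  then obtain a b c where h: "heis_eq M N L u (nf a b c)" by (auto simp: hasnf_def)
  have 1: "heis_eq M N L (u @ wy) (nf a b c @ wy)" by (rule heis_ctxR[OF h])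
  have 2: "heis_eq M N L ((wpow wz c @ wpow wy b) @ (wpow wx a @ wy) @ [])
     ((wpow wz c @ wpow wy b) @ (wpow wz a @ wy @ wpow wx a) @ [])"
    by (rule heis_ctx[OF xpow_y])
  have 3: "heis_eq M N L (wpow wz c @ (wpow wy b @ wpow wz a) @ (wy @ wpow wx a))
     (wpow wz c @ (wpow wz a @ wpow wy b) @ (wy @ wpow wx a))"
    by (rule heis_ctx[OF heis_eq.sym[OF comm_pow2[OF zy_comm]]])
  have e: "wpow wz c @ (wpow wz a @ wpow wy b) @ (wy @ wpow wx a) = nf a (Suc b) (c + a)"
    by (simp add: nf_def wpow_Suc2 wpow_add)
  from 1 2 3 have "heis_eq M N L (u @ wy) (nf a (Suc b) (c + a))"
    unfolding e[symmetric] by (simp add: nf_def) (meson heis_eq.trans)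
  then show ?thesis unfolding hasnf_def by auto
qed

lemma hasnf_xpow: "hasnf M N L u \<Longrightarrow> hasnf M N L (u @ wpow wx k)"
proof (induction k)
  case 0 then show ?case by simp
next
  case (Suc k)
  then have "hasnf M N L ((u @ wpow wx k) @ wx)" using hasnf_x by blast
  then show ?case by (simp add: wpow_Suc2)
qed

lemma hasnf_ypow: "hasnf M N L u \<Longrightarrow> hasnf M N L (u @ wpow wy k)"
proof (induction k)
  case 0 then show ?case by simp
next
  case (Suc k)
  then have "hasnf M N L ((u @ wpow wy k) @ wy)" using hasnf_y by blast
  then show ?case by (simp add: wpow_Suc2)
qed

lemma hasnf_cong: "heis_eq M N L u v \<Longrightarrow> hasnf M N L v \<Longrightarrow> hasnf M N L u"
  unfolding hasnf_def by (meson heis_eq.trans)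

lemma xi_pow: assumes "N \<ge> 1" shows "heis_eq M N L (u @ wxi) (u @ wpow wx (N - 1))"
proof -
  have r: "wpow wx N \<in> heis_relators M N L" by (simp add: heis_relators_def)
  have 1: "heis_eq M N L ((u @ wxi) @ wpow wx N @ []) ((u @ wxi) @ [])"
    by (rule heis_eq.relator[OF r])
  obtain k where k: "N = Suc k" using assms by (cases N) auto
  have 2: "heis_eq M N L (u @ (GX,True) # inv_letter (GX,True) # wpow wx k) (u @ wpow wx k)"
    by (rule heis_cancel')
  from 1 2 show ?thesis using k
    by (simp add: wpow_Suc wxi_def wx_def inv_letter_def) (meson heis_eq.trans heis_eq.sym)
qed

lemma yi_pow: assumes "M \<ge> 1" shows "heis_eq M N L (u @ wyi) (u @ wpow wy (M - 1))"
proof -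
  have r: "wpow wy M \<in> heis_relators M N L" by (simp add: heis_relators_def)
  have 1: "heis_eq M N L ((u @ wyi) @ wpow wy M @ []) ((u @ wyi) @ [])"
    by (rule heis_eq.relator[OF r])
  obtain k where k: "M = Suc k" using assms by (cases M) auto
  have 2: "heis_eq M N L (u @ (GY,True) # inv_letter (GY,True) # wpow wy k) (u @ wpow wy k)"
    by (rule heis_cancel')
  from 1 2 show ?thesis using k
    by (simp add: wpow_Suc wyi_def wy_def inv_letter_def) (meson heis_eq.trans heis_eq.sym)
qed

lemma hasnf_all: assumes "M \<ge> 1" "N \<ge> 1" shows "hasnf M N L u"
proof (induction u rule: rev_induct)
  case Nil
  have "nf 0 0 0 = []" by (simp add: nf_def)
  then show ?case unfolding hasnf_def by (metis heis_eq.refl)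
next
  case (snoc l u)
  obtain g i where l: "l = (g, i)" by fastforce
  show ?case
  proof (cases g; cases i)
    assume "g = GX" "\<not> i"
    then show ?thesis using hasnf_x[OF snoc] l by (simp add: wx_def)
  next
    assume "g = GY" "\<not> i"
    then show ?thesis using hasnf_y[OF snoc] l by (simp add: wy_def)
  next
    assume "g = GX" "i"
    then show ?thesis using hasnf_cong[OF xi_pow[OF assms(2)] hasnf_xpow[OF snoc]] l
      by (simp add: wxi_def)
  next
    assume "g = GY" "i"
    then show ?thesis using hasnf_cong[OF yi_pow[OF assms(1)] hasnf_ypow[OF snoc]] l
      by (simp add: wyi_def)
  qed
qed

lemma pow_remove:
  assumes "heis_eq M N L v []"
  shows "heis_eq M N L (p @ wpow v k @ q) (p @ q)"
proof (induction k)
  case 0 then show ?case by (simp add: heis_eq.refl)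
next
  case (Suc k)
  have "heis_eq M N L (p @ v @ (wpow v k @ q)) (p @ [] @ (wpow v k @ q))"
    by (rule heis_ctx[OF assms])
  with Suc show ?case by (simp add: wpow_Suc) (meson heis_eq.trans)
qed

lemma pow_reduce:
  assumes "heis_eq M N L (wpow w n) []"
  shows "heis_eq M N L (p @ wpow w m @ q) (p @ wpow w (m mod n) @ q)"
proof -
  have "wpow w m = wpow (wpow w n) (m div n) @ wpow w (m mod n)"
    by (metis div_mult_mod_eq wpow_add wpow_mult mult.commute)
  then show ?thesis using pow_remove[OF assms, of p "m div n" "wpow w (m mod n) @ q"] by simp
qed

lemma nf_reduce:
  assumes "L dvd M" "L dvd N"
  shows "heis_eq M N L (nf a b c) (nf (a mod N) (b mod M) (c mod L))"
proof -
  have rx: "heis_eq M N L (wpow wx N) []" by (simp add: heis_rel0 heis_relators_def)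
  have ry: "heis_eq M N L (wpow wy M) []" by (simp add: heis_rel0 heis_relators_def)
  have rz: "heis_eq M N L (wpow wz L) []" by (simp add: heis_rel0 heis_relators_def)
  have 1: "heis_eq M N L ([] @ wpow wz c @ (wpow wy b @ wpow wx a)) ([] @ wpow wz (c mod L) @ (wpow wy b @ wpow wx a))"
    by (rule pow_reduce[OF rz])
  have 2: "heis_eq M N L (wpow wz (c mod L) @ wpow wy b @ wpow wx a) (wpow wz (c mod L) @ wpow wy (b mod M) @ wpow wx a)"
    by (rule pow_reduce[OF ry])
  have 3: "heis_eq M N L ((wpow wz (c mod L) @ wpow wy (b mod M)) @ wpow wx a @ []) ((wpow wz (c mod L) @ wpow wy (b mod M)) @ wpow wx (a mod N) @ [])"
    by (rule pow_reduce[OF rx])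
  from 1 2 3 show ?thesis unfolding nf_def by simp (meson heis_eq.trans)
qed

section \<open>Concrete model\<close>

fun hmul :: "int \<times> int \<times> int \<Rightarrow> int \<times> int \<times> int \<Rightarrow> int \<times> int \<times> int" where
  "hmul (a, b, c) (a', b', c') = (a + a', b + b', c + c' + a * b')"

lemma hmul_assoc: "hmul (hmul p q) r = hmul p (hmul q r)"
  by (cases p; cases q; cases r) (simp add: algebra_simps)

lemma hmul_0[simp]: "hmul (0,0,0) p = p"
  by (cases p) simp

fun lev :: "gen \<times> bool \<Rightarrow> int \<times> int \<times> int" where
  "lev (GX, False) = (1, 0, 0)"
| "lev (GX, True) = (-1, 0, 0)"
| "lev (GY, False) = (0, 1, 0)"
| "lev (GY, True) = (0, -1, 0)"

definition ev :: "hword \<Rightarrow> int \<times> int \<times> int" where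
  "ev w = foldr (\<lambda>l acc. hmul (lev l) acc) w (0, 0, 0)"

lemma ev_Nil[simp]: "ev [] = (0,0,0)" by (simp add: ev_def)
lemma ev_Cons[simp]: "ev (l # w) = hmul (lev l) (ev w)" by (simp add: ev_def)

lemma ev_append: "ev (u @ v) = hmul (ev u) (ev v)"
  by (induction u) (simp_all add: hmul_assoc)

definition tri :: "nat \<Rightarrow> nat" where "tri n = n * (n - 1) div 2"

lemma tri_Suc: "tri (Suc n) = tri n + n"
proof -
  have "even (n * (n - 1))" by (cases n) auto
  then show ?thesis unfolding tri_def by (cases n) (auto elim!: evenE simp: algebra_simps)
qed

lemma ev_wpow: "ev (wpow w n) = (case ev w of (a, b, c) \<Rightarrow>
   (int n * a, int n * b, int n * c + a * b * int (tri n)))"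
proof (induction n)
  case 0 then show ?case by (cases "ev w") (simp add: tri_def)
next
  case (Suc n)
  then show ?case by (cases "ev w") (simp add: wpow_Suc ev_append tri_Suc algebra_simps)
qed

definition heq :: "nat \<Rightarrow> nat \<Rightarrow> nat \<Rightarrow> int \<times> int \<times> int \<Rightarrow> int \<times> int \<times> int \<Rightarrow> bool" where
  "heq M N L p q = (case p of (a, b, c) \<Rightarrow> case q of (a', b', c') \<Rightarrow>
      int N dvd a - a' \<and> int M dvd b - b' \<and> int L dvd c - c')"

lemma heq_mul:
  assumes "L dvd M" "L dvd N" "heq M N L r r'"
  shows "heq M N L (hmul p (hmul r q)) (hmul p (hmul r' q))"
proof -
  obtain a b c where p: "p = (a,b,c)" by (cases p)
  obtain a1 b1 c1 where r: "r = (a1,b1,c1)" by (cases r)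
  obtain a2 b2 c2 where r': "r' = (a2,b2,c2)" by (cases r')
  obtain a3 b3 c3 where q: "q = (a3,b3,c3)" by (cases q)
  from assms(3) have h: "int N dvd a1 - a2" "int M dvd b1 - b2" "int L dvd c1 - c2"
    by (auto simp: heq_def r r')
  have LN: "int L dvd int N" "int L dvd int M" using assms(1,2) by auto
  have "int L dvd (c1 - c2) + (a1 - a2) * b3 + a * (b1 - b2)"
    using h LN by (meson dvd_add dvd_trans dvd_mult dvd_mult2)
  moreover have "(c + (c1 + c3 + a1 * b3) + a * (b1 + b3)) - (c + (c2 + c3 + a2 * b3) + a * (b2 + b3))
     = (c1 - c2) + (a1 - a2) * b3 + a * (b1 - b2)" by (simp add: algebra_simps)
  ultimately show ?thesis using h by (simp add: heq_def p q r r' algebra_simps)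
qed

lemma heq_refl: "heq M N L p p" by (cases p) (simp add: heq_def)
lemma heq_sym: "heq M N L p q \<Longrightarrow> heq M N L q p"
  by (cases p; cases q) (auto simp: heq_def dvd_diff_commute)
lemma heq_trans: "heq M N L p q \<Longrightarrow> heq M N L q r \<Longrightarrow> heq M N L p r"
  apply (cases p; cases q; cases r)
  apply (clarsimp simp: heq_def)
  by (metis diff_add_cancel add_diff_eq dvd_add)

lemma ev_relators:
  assumes "r \<in> heis_relators M N L"
  shows "heq M N L (ev r) (0,0,0)"
  using assms
  by (auto simp: heis_relators_def heq_def ev_append ev_wpow wx_def wy_def wz_def wxi_def wyi_def wzi_def tri_def)

lemma ev_inv: "hmul (lev a) (hmul (lev (inv_letter a)) q) = q"
  by (cases a rule: lev.cases; cases q) (auto simp: inv_letter_def)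

lemma soundness:
  assumes "L dvd M" "L dvd N" "heis_eq M N L u v"
  shows "heq M N L (ev u) (ev v)"
  using assms(3)
proof (induction rule: heis_eq.induct)
  case (refl u) then show ?case by (rule heq_refl)
next
  case (sym u v) then show ?case by (blast intro: heq_sym)
next
  case (trans u v w) then show ?case by (blast intro: heq_trans)
next
  case (cancel u a v)
  show ?case by (simp add: ev_append ev_inv heq_refl)
next
  case (relator r u v)
  have "heq M N L (hmul (ev u) (hmul (ev r) (ev v))) (hmul (ev u) (hmul (0,0,0) (ev v)))"
    by (rule heq_mul[OF assms(1,2) ev_relators[OF relator]])
  then show ?case by (simp add: ev_append)
qed

lemma ev_nf: "ev (nf a b c) = (int a, int b, int c)"
  by (simp add: nf_def ev_append ev_wpow wx_def wy_def wz_def wxi_def wyi_def)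

lemma int_dvd_mod: "int N dvd int a - int a' \<Longrightarrow> a mod N = a' mod N"
proof -
  assume "int N dvd int a - int a'"
  then have "int a mod int N = int a' mod int N" by (simp add: mod_eq_dvd_iff)
  then show ?thesis by (metis of_nat_mod of_nat_eq_iff)
qed

lemma completeness:
  assumes "M \<ge> 1" "N \<ge> 1" "L dvd M" "L dvd N" "heq M N L (ev u) (ev v)"
  shows "heis_eq M N L u v"
proof -
  obtain a b c where u: "heis_eq M N L u (nf a b c)" using hasnf_all[OF assms(1,2)] hasnf_def by blast
  obtain a' b' c' where v: "heis_eq M N L v (nf a' b' c')" using hasnf_all[OF assms(1,2)] hasnf_def by blast
  have "heq M N L (int a, int b, int c) (int a', int b', int c')"
  proof -
    have 1: "heq M N L (ev u) (ev (nf a b c))" by (rule soundness[OF assms(3,4) u])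
    have 2: "heq M N L (ev v) (ev (nf a' b' c'))" by (rule soundness[OF assms(3,4) v])
    have "heq M N L (ev (nf a b c)) (ev (nf a' b' c'))"
      using heq_trans[OF heq_trans[OF heq_sym[OF 1] assms(5)] 2] .
    then show ?thesis by (simp only: ev_nf)
  qed
  then have "int N dvd int a - int a'" "int M dvd int b - int b'" "int L dvd int c - int c'"
    by (auto simp: heq_def)
  then have "a mod N = a' mod N" "b mod M = b' mod M" "c mod L = c' mod L"
    by (simp_all add: int_dvd_mod)
  then have "nf (a mod N) (b mod M) (c mod L) = nf (a' mod N) (b' mod M) (c' mod L)" by simp
  then show ?thesis
    using heis_eq.trans[OF heis_eq.trans[OF u nf_reduce[OF assms(3,4)]]]
       heis_eq.sym[OF heis_eq.trans[OF v nf_reduce[OF assms(3,4)]]] by metis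
qed

section \<open>Number theory\<close>

lemma tri_good:
  assumes "L dvd T" "odd T \<or> even (T div L)"
  shows "L dvd tri T"
  using assms(2)
proof
  assume "odd T"
  then obtain j where "T - 1 = 2 * j" by (metis odd_two_times_div_two_nat)
  then have "tri T = T * j" by (simp add: tri_def)
  then show ?thesis using assms(1) by simp
next
  assume e: "even (T div L)"
  obtain k where k: "T = L * k" using assms(1) by blast
  show ?thesis
  proof (cases "L = 0")
    case True then show ?thesis using k by (simp add: tri_def)
  next
    case False
    then have "T div L = k" using k by simp
    with e obtain j where "k = 2 * j" by blast
    then have "tri T = L * (j * (T - 1))" using k by (simp add: tri_def mult.assoc mult.left_commute)
    then show ?thesis by simp
  qed
qed

lemma tri_double: "tri (2 * T) = T * (2 * T - 1)"
  by (simp add: tri_def)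

lemma tri_bad:
  assumes "L dvd T" "T > 0" "even T" "odd (T div L)"
  shows "\<not> L dvd tri T"
proof
  assume d: "L dvd tri T"
  obtain k where k: "T = L * k" using assms(1) by blast
  have L0: "L > 0" using k assms(2) by (cases L) auto
  have kk: "T div L = k" using k L0 by simp
  then have ok: "odd k" using assms(4) by simp
  have "even (L * k)" using assms(3) k by simp
  then have "even L" using ok by simp
  then obtain h where h: "L = 2 * h" by blast
  have h0: "h > 0" using h L0 by simp
  have T2: "T = 2 * (h * k)" using k h by simp
  have "tri T = T * (T - 1) div 2" by (simp add: tri_def)
  also have "\<dots> = (2 * (h * k * (T - 1))) div 2" by (subst T2) (simp only: mult.assoc)
  also have "\<dots> = h * (k * (T - 1))" by simp
  finally have tt: "tri T = h * (k * (T - 1))" .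
  from d have "2 * h dvd h * (k * (T - 1))" unfolding tt h .
  then have "h * 2 dvd h * (k * (T - 1))" by (simp add: mult.commute)
  then have "2 dvd k * (T - 1)" using h0 nat_mult_dvd_cancel1 by blast
  moreover have "odd (T - 1)" using assms(2,3) by simp
  ultimately show False using ok by simp
qed

lemma least_exp:
  fixes M N L :: nat
  assumes "M \<ge> 1" "N \<ge> 1" "L dvd M" "L dvd N"
  shows "(LEAST n. 0 < n \<and> (N dvd n \<and> M dvd n \<and> L dvd tri n)) =
    (if odd (lcm M N) \<or> even (lcm M N div L) then lcm M N else 2 * lcm M N)"
proof -
  define T where "T = lcm M N"
  have T0: "T > 0" using assms by (simp add: T_def lcm_pos_nat)
  have LT: "L dvd T" using assms T_def by (meson dvd_lcm1 dvd_trans)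
  have iff: "N dvd n \<and> M dvd n \<longleftrightarrow> T dvd n" for n
    by (auto simp: T_def)
  show ?thesis
  proof (cases "odd T \<or> even (T div L)")
    case True
    have "(LEAST n. 0 < n \<and> (N dvd n \<and> M dvd n \<and> L dvd tri n)) = T"
    proof (rule Least_equality)
      show "0 < T \<and> N dvd T \<and> M dvd T \<and> L dvd tri T"
        using T0 iff tri_good[OF LT True] by auto
    next
      fix y assume "0 < y \<and> N dvd y \<and> M dvd y \<and> L dvd tri y"
      then show "T \<le> y" using iff by (auto intro: dvd_imp_le)
    qed
    then show ?thesis using True T_def by simp
  next
    case False
    have "(LEAST n. 0 < n \<and> (N dvd n \<and> M dvd n \<and> L dvd tri n)) = 2 * T"
    proof (rule Least_equality)
      show "0 < 2 * T \<and> N dvd 2 * T \<and> M dvd 2 * T \<and> L dvd tri (2 * T)"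
        using T0 iff LT by (auto simp: tri_double)
    next
      fix y assume y: "0 < y \<and> N dvd y \<and> M dvd y \<and> L dvd tri y"
      then obtain m where m: "y = T * m" using iff by blast
      have "m \<noteq> 0" using y m by auto
      moreover have "m \<noteq> 1" using y m tri_bad[OF LT T0] False by auto
      ultimately have "m \<ge> 2" by simp
      then show "2 * T \<le> y" using m by simp
    qed
    then show ?thesis using False T_def by simp
  qed
qed

section \<open>The group\<close>

lemma class_eq:
  "heis_class M N L u = heis_class M N L v \<longleftrightarrow> heis_eq M N L u v"
proof
  assume "heis_class M N L u = heis_class M N L v"
  moreover have "v \<in> heis_class M N L v" by (simp add: heis_class_def heis_eq.refl)
  ultimately show "heis_eq M N L u v" unfolding heis_class_def by blast
next
  assume h: "heis_eq M N L u v"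
  show "heis_class M N L u = heis_class M N L v"
    unfolding heis_class_def using h by (blast intro: heis_eq.trans heis_eq.sym)
qed

lemma mult_class:
  "monoid.mult (heis_group M N L) (heis_class M N L u) (heis_class M N L v) = heis_class M N L (u @ v)"
proof -
  have "heis_class M N L (a @ b) = heis_class M N L (u @ v)"
    if "a \<in> heis_class M N L u" "b \<in> heis_class M N L v" for a b
  proof -
    have "heis_eq M N L (u @ v) (a @ v)" using that(1)
      by (simp add: heis_class_def heis_ctxR)
    moreover have "heis_eq M N L (a @ v) (a @ b)" using that(2)
      by (simp add: heis_class_def heis_ctxL)
    ultimately show ?thesis by (metis class_eq heis_eq.trans)
  qed
  moreover have "u \<in> heis_class M N L u" "v \<in> heis_class M N L v"
    by (simp_all add: heis_class_def heis_eq.refl)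
  ultimately have "(\<Union>a\<in>heis_class M N L u. \<Union>b\<in>heis_class M N L v. heis_class M N L (a @ b))
     = heis_class M N L (u @ v)" by blast
  then show ?thesis by (simp add: heis_group_def)
qed

lemma pow_class:
  "heis_class M N L w [^]\<^bsub>heis_group M N L\<^esub> (n::nat) = heis_class M N L (wpow w n)"
proof (induction n)
  case 0 then show ?case by (simp add: heis_group_def)
next
  case (Suc n)
  have "heis_class M N L w [^]\<^bsub>heis_group M N L\<^esub> Suc n
     = monoid.mult (heis_group M N L) (heis_class M N L w [^]\<^bsub>heis_group M N L\<^esub> n) (heis_class M N L w)"
    by (rule nat_pow_Suc)
  also have "\<dots> = heis_class M N L (wpow w n @ w)" by (simp only: Suc mult_class)
  finally show ?case by (simp add: wpow_Suc2)
qed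

lemma exp_cond_word:
  assumes "M \<ge> 1" "N \<ge> 1" "L dvd M" "L dvd N"
  shows "(\<forall>g\<in>carrier (heis_group M N L). g [^]\<^bsub>heis_group M N L\<^esub> (n::nat) = \<one>\<^bsub>heis_group M N L\<^esub>)
     \<longleftrightarrow> (\<forall>w. heq M N L (ev (wpow w n)) (0,0,0))"
proof -
  have c: "carrier (heis_group M N L) = range (heis_class M N L)"
    "\<one>\<^bsub>heis_group M N L\<^esub> = heis_class M N L []" by (simp_all add: heis_group_def)
  have "(\<forall>g\<in>carrier (heis_group M N L). g [^]\<^bsub>heis_group M N L\<^esub> n = \<one>\<^bsub>heis_group M N L\<^esub>)
     \<longleftrightarrow> (\<forall>w. heis_class M N L (wpow w n) = heis_class M N L [])"
    unfolding c by (simp add: pow_class)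
  also have "\<dots> \<longleftrightarrow> (\<forall>w. heis_eq M N L (wpow w n) [])" by (simp add: class_eq)
  also have "\<dots> \<longleftrightarrow> (\<forall>w. heq M N L (ev (wpow w n)) (0,0,0))"
    using soundness[OF assms(3,4)] completeness[OF assms] by (metis ev_Nil)
  finally show ?thesis .
qed

lemma exp_cond_num:
  assumes "L dvd M" "L dvd N"
  shows "(\<forall>w. heq M N L (ev (wpow w n)) (0,0,0)) \<longleftrightarrow> (N dvd n \<and> M dvd n \<and> L dvd tri n)"
proof
  assume h: "\<forall>w. heq M N L (ev (wpow w n)) (0,0,0)"
  have "heq M N L (ev (wpow wx n)) (0,0,0)" using h by blast
  then have 1: "N dvd n" by (simp add: ev_wpow wx_def heq_def)
  have "heq M N L (ev (wpow wy n)) (0,0,0)" using h by blast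
  then have 2: "M dvd n" by (simp add: ev_wpow wy_def heq_def)
  have "heq M N L (ev (wpow (wx @ wy) n)) (0,0,0)" using h by blast
  then have 3: "int L dvd int n + int (tri n)" by (simp add: ev_wpow wx_def wy_def heq_def)
  have "int L dvd int n" using 1 assms(2) by (simp add: dvd_trans)
  with 3 have "int L dvd int (tri n)" using dvd_add_right_iff by blast
  then show "N dvd n \<and> M dvd n \<and> L dvd tri n" using 1 2 by simp
next
  assume h: "N dvd n \<and> M dvd n \<and> L dvd tri n"
  show "\<forall>w. heq M N L (ev (wpow w n)) (0,0,0)"
  proof
    fix w
    obtain a b c where e: "ev w = (a,b,c)" by (cases "ev w")
    have n1: "int N dvd int n" "int M dvd int n" "int L dvd int (tri n)" using h by simp_all
    have n2: "int L dvd int n" using h assms(2) by (simp add: dvd_trans)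
    have "int L dvd int n * c + a * b * int (tri n)" using n1(3) n2 by simp
    then show "heq M N L (ev (wpow w n)) (0,0,0)" using n1
      by (simp add: ev_wpow e heq_def)
  qed
qed

theorem proposition4:
  "(\<forall>M N L :: nat. M \<ge> 1 \<longrightarrow> N \<ge> 1 \<longrightarrow> L dvd M \<longrightarrow> L dvd N \<longrightarrow>
      exponent (heis_group M N L) =
        (if odd (lcm M N) \<or> even (lcm M N div L) then lcm M N else 2 * lcm M N))
   \<and> (\<forall>N :: nat. N \<ge> 1 \<longrightarrow> odd N \<longrightarrow> exponent (heis_group N N N) = N)
   \<and> (\<forall>N :: nat. N \<ge> 1 \<longrightarrow> even N \<longrightarrow> exponent (heis_group N N (N div 2)) = N)"
proof -
  have P1: "exponent (heis_group M N L) =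
        (if odd (lcm M N) \<or> even (lcm M N div L) then lcm M N else 2 * lcm M N)"
    if a: "M \<ge> 1" "N \<ge> 1" "L dvd M" "L dvd N" for M N L :: nat
  proof -
    have "exponent (heis_group M N L) = (LEAST n. 0 < n \<and> (N dvd n \<and> M dvd n \<and> L dvd tri n))"
      unfolding exponent_def using exp_cond_word[OF a] exp_cond_num[OF a(3,4)] by simp
    then show ?thesis using least_exp[OF a] by simp
  qed
  have P2: "exponent (heis_group N N N) = N" if "N \<ge> 1" "odd N" for N :: nat
    using P1[of N N N] that by simp
  have P3: "exponent (heis_group N N (N div 2)) = N" if "N \<ge> 1" "even N" for N :: nat
  proof -
    have d: "N div 2 dvd N" using that by auto
    have "N div (N div 2) = 2" using that by (auto elim!: evenE)
    then show ?thesis using P1[OF that(1) that(1) d d] by simp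
  qed
  show ?thesis using P1 P2 P3 by blast
qed

end
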